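(* For any $n\in\mathbb{N}$, the monoid $\mathrm{rps}_n$ satisfies the identity $(xy)^{n+1}=(xy)^n yx$.
   Context: Let $\mathcal{A}_n=\{1<2<\cdots<n\}$. An rPS tableau is a finite (possibly empty) sequence of nonempty bottom-justified columns of boxes filled with positive integers, such that the entries of each column are weakly decreasing from top to bottom and the bottom entries of the columns form a strictly increasing sequence from left to right. Right insertion of a symbol $a$ into an rPS tableau $B$: if $a$ is strictly greater than every entry of the bottom row, append a new column consisting of $a$ at the right end; otherwise, let $z$ be the leftmost bottom-row entry with $z\geq a$ and put $a$ in a new box at the bottom of the column of $z$ (the previous entries of that column move up one box). For $w=w_1\cdots w_k$, $\mathfrak{R}_r(w)$ is obtained by starting with the empty tableau and right-inserting $w_1,\dots,w_k$ in order. The monoid $\mathrm{rps}_n$ is the quotient of $\mathcal{A}_n^*$ by the congruence $u\equiv v\iff\mathfrak{R}_r(u)=\mathfrak{R}_r(v)$. A monoid $M$ satisfies the identity $u(x,y)=v(x,y)$ if equality holds in $M$ for every substitution of elements of $M$ for the variables $x,y$. *)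

theory Defs
  imports Main
begin

(* An rPS tableau is a list of columns, left to right.  Each column is a
   nonempty list of entries listed from TOP to BOTTOM, so the bottom entry
   of a column is its last element. *)
type_synonym rps_tableau = "nat list list"

definition is_rps_tableau :: "rps_tableau \<Rightarrow> bool" where
  "is_rps_tableau T \<longleftrightarrow>
     (\<forall>c \<in> set T. c \<noteq> [] \<and> sorted_wrt (\<ge>) c \<and> (\<forall>a\<in>set c. 0 < a)) \<and>
     sorted_wrt (<) (map last T)"

fun rps_insert :: "nat \<Rightarrow> rps_tableau \<Rightarrow> rps_tableau" where
  "rps_insert a [] = [[a]]"
| "rps_insert a (c # T) =
     (if a \<le> last c then (c @ [a]) # T else c # rps_insert a T)"

definition rps_tab :: "nat list \<Rightarrow> rps_tableau" where
  "rps_tab w = fold rps_insert w []"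

definition words :: "nat \<Rightarrow> nat list set" where
  "words n = {w. set w \<subseteq> {1..n}}"

definition rps_equiv :: "nat list \<Rightarrow> nat list \<Rightarrow> bool" where
  "rps_equiv u v \<longleftrightarrow> rps_tab u = rps_tab v"

definition rps_monoid :: "nat \<Rightarrow> nat list set set" where
  "rps_monoid n = words n // {(u, v). rps_equiv u v}"

definition wpow :: "nat list \<Rightarrow> nat \<Rightarrow> nat list" where
  "wpow w k = concat (replicate k w)"

end

theory Submission
  imports Defs
begin

abbreviation bot :: "rps_tableau \<Rightarrow> nat list" where "bot T \<equiv> map last T"

definition cnt :: "rps_tableau \<Rightarrow> nat \<Rightarrow> nat" where
  "cnt T v = length (filter (\<lambda>s. s \<le> v) (bot T))"
definition cntl :: "rps_tableau \<Rightarrow> nat \<Rightarrow> nat" where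
  "cntl T v = length (filter (\<lambda>s. s < v) (bot T))"

lemma filter_len_mono: "(\<And>x. P x \<Longrightarrow> Q x) \<Longrightarrow> length (filter P xs) \<le> length (filter Q xs)"
  by (induction xs) auto

lemma filter_split: "length (filter (\<lambda>s. s \<le> (a::nat)) xs) =
   length (filter (\<lambda>s. s < a) xs) + length (filter (\<lambda>s. s = a) xs)"
  by (induction xs) auto

lemma cnt_mono: "cnt T v \<le> cnt (rps_insert a T) v"
  unfolding cnt_def by (induction T) auto

lemma cntl_mono: "cntl T v \<le> cntl (rps_insert a T) v"
  unfolding cntl_def by (induction T) auto

lemma cnt_fold_mono: "cnt T v \<le> cnt (fold rps_insert u T) v"
  by (induction u arbitrary: T) (auto intro: le_trans[OF cnt_mono])

lemma cntl_fold_mono: "cntl T v \<le> cntl (fold rps_insert u T) v"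
  by (induction u arbitrary: T) (auto intro: le_trans[OF cntl_mono])

lemma mem_ins: "a \<in> set (bot (rps_insert a T))"
  by (induction T) auto

lemma cnt_ins: "cntl T a + 1 \<le> cnt (rps_insert a T) a"
proof -
  have "length (filter (\<lambda>s. s = a) (bot (rps_insert a T))) \<ge> 1"
    using mem_ins[of a T] by (metis (mono_tags) One_nat_def Suc_leI empty_filter_conv length_greater_0_conv)
  then show ?thesis using cntl_mono[of T a a] unfolding cnt_def cntl_def
    using filter_split[of a "bot (rps_insert a T)"] by linarith
qed

lemma cnt_le: "v \<le> v' \<Longrightarrow> cnt T v \<le> cnt T v'"
  unfolding cnt_def by (rule filter_len_mono) auto

lemma cntl_le_cnt: "a \<le> v \<Longrightarrow> cntl T a \<le> cnt T v"
  unfolding cnt_def cntl_def by (rule filter_len_mono) auto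

lemma round:
  assumes H: "\<And>v. min k (card {l \<in> set w. l \<le> v}) \<le> cnt T v"
  shows "min (Suc k) (card {l \<in> set w. l \<le> v}) \<le> cnt (fold rps_insert w T) v"
proof (cases "{l \<in> set w. l \<le> v} = {}")
  case True then show ?thesis by (simp only: card.empty)
next
  case False
  define A where "A = {l \<in> set w. l \<le> v}"
  define a where "a = Max A"
  have finA: "finite A" unfolding A_def by simp
  have aA: "a \<in> A" using False finA unfolding a_def A_def by (intro Max_in) auto
  have Aeq: "A = insert a {l \<in> set w. l < a}"
  proof -
    have "\<And>l. l \<in> A \<Longrightarrow> l \<le> a" unfolding a_def using finA by (rule Max_ge)
    then show ?thesis using aA unfolding A_def by fastforce
  qed
  have cA: "card A = Suc (card {l \<in> set w. l < a})"
    using Aeq by simp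
  have hl: "min k (card {l \<in> set w. l < a}) \<le> cntl T a"
  proof (cases a)
    case 0 then show ?thesis by simp
  next
    case (Suc b)
    have "{l \<in> set w. l < a} = {l \<in> set w. l \<le> b}" using Suc by auto
    moreover have "cntl T a = cnt T b" unfolding cnt_def cntl_def using Suc
      by (metis less_Suc_eq_le)
    ultimately show ?thesis using H[of b] by simp
  qed
  from aA have "a \<in> set w" unfolding A_def by simp
  then obtain u1 u2 where w: "w = u1 @ a # u2" by (metis split_list)
  define T1 where "T1 = fold rps_insert u1 T"
  have "cntl T a \<le> cntl T1 a" unfolding T1_def by (rule cntl_fold_mono)
  also have "cntl T1 a + 1 \<le> cnt (rps_insert a T1) a" by (rule cnt_ins)
  ultimately have "cntl T a + 1 \<le> cnt (rps_insert a T1) a" by linarith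
  also have "\<dots> \<le> cnt (fold rps_insert u2 (rps_insert a T1)) a" by (rule cnt_fold_mono)
  also have "\<dots> \<le> cnt (fold rps_insert u2 (rps_insert a T1)) v"
    using aA unfolding A_def by (intro cnt_le) auto
  also have "fold rps_insert u2 (rps_insert a T1) = fold rps_insert w T"
    unfolding w T1_def by simp
  finally show ?thesis using hl cA unfolding A_def by linarith
qed

lemma wpow_Suc: "wpow w (Suc k) = wpow w k @ w"
  unfolding wpow_def by (induction k) auto

lemma rounds: "min k (card {l \<in> set w. l \<le> v}) \<le> cnt (fold rps_insert (wpow w k) []) v"
proof (induction k arbitrary: v)
  case 0 then show ?case by simp
next
  case (Suc k)
  then show ?case using round[of k w "fold rps_insert (wpow w k) []" v]
    by (simp add: wpow_Suc)
qed

lemma bot_ins_sub: "set (bot (rps_insert a T)) \<subseteq> insert a (set (bot T))"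
  by (induction T) auto

lemma bot_fold_sub: "set (bot (fold rps_insert u T)) \<subseteq> set u \<union> set (bot T)"
proof (induction u arbitrary: T)
  case Nil then show ?case by simp
next
  case (Cons a u)
  show ?case using Cons[of "rps_insert a T"] bot_ins_sub[of a T] by auto
qed

lemma sorted_ins: "sorted_wrt (<) (bot T) \<Longrightarrow> sorted_wrt (<) (bot (rps_insert a T))"
proof (induction T)
  case Nil then show ?case by simp
next
  case (Cons c T)
  show ?case
  proof (cases "a \<le> last c")
    case True then show ?thesis using Cons.prems by auto
  next
    case False
    have "\<forall>x\<in>set (bot (rps_insert a T)). last c < x"
      using bot_ins_sub[of a T] Cons.prems False by auto
    then show ?thesis using Cons False by auto
  qed
qed

lemma sorted_fold: "sorted_wrt (<) (bot T) \<Longrightarrow> sorted_wrt (<) (bot (fold rps_insert u T))"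
  by (induction u arbitrary: T) (auto intro: sorted_ins)

lemma sorted_distinct: "sorted_wrt (<) (xs::nat list) \<Longrightarrow> distinct xs"
  by (induction xs) auto

lemma bot_keep: "sorted_wrt (<) (bot T) \<Longrightarrow> a \<in> set (bot T) \<Longrightarrow> bot (rps_insert a T) = bot T"
  by (induction T) auto

lemma ins_comm: "sorted_wrt (<) (bot T) \<Longrightarrow> a \<in> set (bot T) \<Longrightarrow> b \<in> set (bot T) \<Longrightarrow>
   rps_insert a (rps_insert b T) = rps_insert b (rps_insert a T)"
proof (induction T)
  case Nil then show ?case by simp
next
  case (Cons c T)
  show ?case
  proof (cases "a = last c")
    case True
    then show ?thesis using Cons.prems by (cases "b = last c") auto
  next
    case False
    then have "a \<in> set (bot T)" "last c < a" using Cons.prems by auto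
    then show ?thesis using Cons bot_keep[of T b] by (cases "b = last c") auto
  qed
qed

lemma fold_comm1: "sorted_wrt (<) (bot T) \<Longrightarrow> a \<in> set (bot T) \<Longrightarrow> set u \<subseteq> set (bot T) \<Longrightarrow>
   fold rps_insert u (rps_insert a T) = rps_insert a (fold rps_insert u T)"
proof (induction u arbitrary: T)
  case Nil then show ?case by simp
next
  case (Cons b u)
  have b: "b \<in> set (bot T)" using Cons.prems by simp
  have "fold rps_insert (b # u) (rps_insert a T) = fold rps_insert u (rps_insert b (rps_insert a T))"
    by simp
  also have "\<dots> = fold rps_insert u (rps_insert a (rps_insert b T))"
    using ins_comm[OF Cons.prems(1,2) b] by simp
  also have "\<dots> = rps_insert a (fold rps_insert u (rps_insert b T))"
    using Cons.IH[of "rps_insert b T"] Cons.prems sorted_ins bot_keep[OF Cons.prems(1) b] by auto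
  finally show ?case by simp
qed

lemma fold_swap: "sorted_wrt (<) (bot T) \<Longrightarrow> set x \<subseteq> set (bot T) \<Longrightarrow> set y \<subseteq> set (bot T) \<Longrightarrow>
   fold rps_insert (x @ y) T = fold rps_insert (y @ x) T"
proof (induction x arbitrary: T)
  case Nil then show ?case by simp
next
  case (Cons a x)
  have a: "a \<in> set (bot T)" using Cons.prems by simp
  have bk: "bot (rps_insert a T) = bot T" using bot_keep[OF Cons.prems(1) a] .
  have "fold rps_insert ((a # x) @ y) T = fold rps_insert (x @ y) (rps_insert a T)" by simp
  also have "\<dots> = fold rps_insert (y @ x) (rps_insert a T)"
    using Cons.IH[of "rps_insert a T"] Cons.prems bk by auto
  also have "\<dots> = fold rps_insert x (fold rps_insert y (rps_insert a T))" by simp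
  also have "\<dots> = fold rps_insert x (rps_insert a (fold rps_insert y T))"
    using fold_comm1[OF Cons.prems(1) a Cons.prems(3)] by simp
  also have "\<dots> = fold rps_insert (y @ a # x) T" by simp
  finally show ?case by simp
qed

theorem proposition4p7:
  fixes n :: nat
  shows "\<forall>x \<in> words n. \<forall>y \<in> words n.
           rps_equiv (wpow (x @ y) (n + 1)) (wpow (x @ y) n @ y @ x)"
proof (intro ballI)
  fix x y assume x: "x \<in> words n" and y: "y \<in> words n"
  define w where "w = x @ y"
  define L where "L = set w"
  have Lsub: "L \<subseteq> {1..n}" using x y unfolding L_def w_def words_def by auto
  have cardL: "card L \<le> n" using card_mono[OF _ Lsub] by simp
  define T where "T = fold rps_insert (wpow w n) []"
  have srt: "sorted_wrt (<) (bot T)" unfolding T_def by (rule sorted_fold) simp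
  have sub: "set (bot T) \<subseteq> L"
    using bot_fold_sub[of "wpow w n" "[]"] unfolding T_def L_def
    by (auto simp: wpow_def)
  have "{l \<in> L. l \<le> n} = L" using Lsub by auto
  then have "card L \<le> cnt T n" using rounds[of n w n] cardL unfolding T_def L_def by simp
  also have "cnt T n \<le> length (bot T)" unfolding cnt_def by simp
  also have "\<dots> = card (set (bot T))" using distinct_card[OF sorted_distinct[OF srt]] by simp
  finally have "card L \<le> card (set (bot T))" .
  then have eq: "set (bot T) = L" using sub by (intro card_seteq) (auto simp: L_def)
  have "rps_tab (wpow w (n + 1)) = fold rps_insert (x @ y) T"
    unfolding rps_tab_def T_def using wpow_Suc[of w n] by (simp add: w_def)
  also have "\<dots> = fold rps_insert (y @ x) T"
    using eq srt by (intro fold_swap) (auto simp: L_def w_def)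
  also have "\<dots> = rps_tab (wpow w n @ y @ x)" unfolding rps_tab_def T_def by simp
  finally show "rps_equiv (wpow (x @ y) (n + 1)) (wpow (x @ y) n @ y @ x)"
    unfolding rps_equiv_def w_def .
qed

end
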